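(* Let $(X,\mathcal{R})$ be a commutative $d$-class association scheme and let $\mathbf{x}\in\mathbb{Q}^X$ be a nonzero vector (the characteristic vector of a nonempty subset $C\subseteq X$, or more generally of a rationally weighted subset $C$), with inner distribution $a=[a_0,\ldots,a_d]$, $a_i=\mathbf{x}^\top A_i\mathbf{x}/\mathbf{x}^\top\mathbf{x}$, and let $T(C)=\{j: E_j\mathbf{x}=0\}$. Then: (i) if $j\in T(C)$ and $\sigma\in\Sigma_\mathbb{Q}$, then $j^\sigma\in T(C)$; hence $T(C)$ is a union of orbits $\mathcal{Q}_j\in\{\mathcal{Q}_1,\ldots,\mathcal{Q}_e\}$; (ii) if $\iota(i)=\iota(j)$ and $aQ_i=0$, then $aQ_j=0$; equivalently, if $E_i\mathbf{x}=0$ then $E_j\mathbf{x}=0$; (iii) if $aQ_i=0$ then $a\overline{Q}_{\iota(i)}=0$; equivalently, if $E_i\mathbf{x}=0$ then $F_{\iota(i)}\mathbf{x}=0$. Here $Q_i$ denotes column $i$ of $Q$ and $\overline{Q}_\ell$ column $\ell$ of $\overline{Q}$.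
   Context: A (commutative) association scheme is a pair $(X,\mathcal{R})$ with $X$ a nonempty finite set and $\mathcal{R}=\{R_0,\ldots,R_d\}$ a partition of $X\times X$ such that $R_0$ is the identity relation, each transpose $R_i^\top$ is some $R_{i'}$, and there are numbers $p_{ij}^k=p_{ji}^k$ such that for every $(a,b)\in R_k$ the number of $c$ with $(a,c)\in R_i$, $(c,b)\in R_j$ is $p_{ij}^k$. Its adjacency matrices $A_0,\ldots,A_d$ are the $0/1$ matrices of the $R_i$; their complex span has a unique basis of primitive idempotents $E_0,\ldots,E_d$ ($E_iE_j=\delta_{ij}E_i$, $\sum_jE_j=I$, $E_0=\frac1{|X|}J$). The second eigenmatrix $Q=[Q_{ij}]_{i,j=0}^d$ is defined by $E_j=\frac1{|X|}\sum_{i=0}^dQ_{ij}A_i$. The splitting field $\mathbb{F}$ is $\mathbb{Q}$ with all eigenvalues of $A_1,\ldots,A_d$ adjoined. Each $\boldsymbol\sigma\in\mathrm{Gal}(\mathbb{F}/\mathbb{Q})$, applied entrywise, maps $E_j$ to a primitive idempotent $E_{j^\sigma}$, defining a permutation $\sigma$ of $\{0,\ldots,d\}$; $\Sigma_\mathbb{Q}$ is the group of these permutations. Let $\mathcal{Q}_0=\{0\},\mathcal{Q}_1,\ldots,\mathcal{Q}_e$ be the orbits of $\Sigma_\mathbb{Q}$ on $\{0,\ldots,d\}$, define $\iota:\{0,\ldots,d\}\to\{0,\ldots,e\}$ by $\iota(i)=\ell$ if $i\in\mathcal{Q}_\ell$, let $F_\ell=\sum_{i\in\mathcal{Q}_\ell}E_i$,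 and let $\overline{Q}=QO$ where $O$ is the $(d+1)\times(e+1)$ matrix with $O_{i\ell}=1$ if $i\in\mathcal{Q}_\ell$ and $0$ otherwise. A (possibly weighted) subset $C$ with vector $\mathbf{x}$ is a Delsarte $T$-design if $E_j\mathbf{x}=0$ for all $j\in T$. *)

theory Defs
  imports "HOL-Analysis.Analysis"
begin

text \<open>Association scheme on the finite type 'x: the relation R_i is {(a,b). R a b = i}, i = 0..d.\<close>
definition comm_assoc_scheme :: "nat \<Rightarrow> ('x::finite \<Rightarrow> 'x \<Rightarrow> nat) \<Rightarrow> bool" where
  "comm_assoc_scheme d R \<longleftrightarrow>
     (\<forall>a b. R a b \<le> d) \<and>
     (\<forall>i\<le>d. \<exists>a b. R a b = i) \<and>
     (\<forall>a b. R a b = 0 \<longleftrightarrow> a = b) \<and>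
     (\<forall>i\<le>d. \<exists>i'\<le>d. \<forall>a b. R a b = i \<longleftrightarrow> R b a = i') \<and>
     (\<exists>p :: nat \<Rightarrow> nat \<Rightarrow> nat \<Rightarrow> nat. \<forall>i\<le>d. \<forall>j\<le>d. \<forall>k\<le>d.
        p i j k = p j i k \<and>
        (\<forall>a b. R a b = k \<longrightarrow> card {c. R a c = i \<and> R c b = j} = p i j k))"

definition adj :: "('x::finite \<Rightarrow> 'x \<Rightarrow> nat) \<Rightarrow> nat \<Rightarrow> complex^'x^'x" where
  "adj R i = (\<chi> a b. if R a b = i then 1 else 0)"

definition prim_idempotents ::
  "nat \<Rightarrow> ('x::finite \<Rightarrow> 'x \<Rightarrow> nat) \<Rightarrow> (nat \<Rightarrow> complex^'x^'x) \<Rightarrow> (nat \<Rightarrow> nat \<Rightarrow> complex) \<Rightarrow> bool" where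
  "prim_idempotents d R E Q \<longleftrightarrow>
     (\<forall>j\<le>d. E j \<noteq> 0) \<and>
     (\<forall>i\<le>d. \<forall>j\<le>d. E i ** E j = (if i = j then E i else 0)) \<and>
     (\<Sum>j\<le>d. E j) = mat 1 \<and>
     E 0 = (\<chi> a b. 1 / of_nat CARD('x)) \<and>
     (\<forall>j\<le>d. \<forall>a b. E j $ a $ b = (1 / of_nat CARD('x)) * (\<Sum>i\<le>d. Q i j * adj R i $ a $ b))"

definition eigenvalues_nontriv :: "nat \<Rightarrow> ('x::finite \<Rightarrow> 'x \<Rightarrow> nat) \<Rightarrow> complex set" where
  "eigenvalues_nontriv d R =
     {\<mu>. \<exists>i\<in>{1..d}. \<exists>v::complex^'x. v \<noteq> 0 \<and> adj R i *v v = \<mu> *s v}"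

definition is_subfield :: "complex set \<Rightarrow> bool" where
  "is_subfield K \<longleftrightarrow> 0 \<in> K \<and> 1 \<in> K \<and>
     (\<forall>x\<in>K. \<forall>y\<in>K. x + y \<in> K \<and> x * y \<in> K) \<and>
     (\<forall>x\<in>K. - x \<in> K \<and> inverse x \<in> K)"

definition splitting_field :: "nat \<Rightarrow> ('x::finite \<Rightarrow> 'x \<Rightarrow> nat) \<Rightarrow> complex set" where
  "splitting_field d R = \<Inter>{K. is_subfield K \<and> eigenvalues_nontriv d R \<subseteq> K}"

text \<open>Field automorphisms of K (these automatically fix Q), i.e. elements of Gal(K/Q).\<close>
definition gal_aut :: "complex set \<Rightarrow> (complex \<Rightarrow> complex) \<Rightarrow> bool" where
  "gal_aut K \<sigma> \<longleftrightarrow> bij_betw \<sigma> K K \<and>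
     (\<forall>x\<in>K. \<forall>y\<in>K. \<sigma> (x + y) = \<sigma> x + \<sigma> y \<and> \<sigma> (x * y) = \<sigma> x * \<sigma> y)"

definition mat_map :: "(complex \<Rightarrow> complex) \<Rightarrow> complex^'x^'x \<Rightarrow> complex^'x^'x" where
  "mat_map \<sigma> M = (\<chi> a b. \<sigma> (M $ a $ b))"

definition gal_orbit :: "nat \<Rightarrow> ('x::finite \<Rightarrow> 'x \<Rightarrow> nat) \<Rightarrow> (nat \<Rightarrow> complex^'x^'x) \<Rightarrow> nat \<Rightarrow> nat set" where
  "gal_orbit d R E i =
     {j. j \<le> d \<and> (\<exists>\<sigma>. gal_aut (splitting_field d R) \<sigma> \<and> mat_map \<sigma> (E i) = E j)}"

definition inner_dist :: "('x::finite \<Rightarrow> 'x \<Rightarrow> nat) \<Rightarrow> complex^'x \<Rightarrow> nat \<Rightarrow> complex" where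
  "inner_dist R x i = (\<Sum>a\<in>UNIV. \<Sum>b\<in>UNIV. x $ a * adj R i $ a $ b * x $ b) / (\<Sum>a\<in>UNIV. x $ a * x $ a)"

definition design_set :: "nat \<Rightarrow> (nat \<Rightarrow> complex^'x::finite^'x) \<Rightarrow> complex^'x \<Rightarrow> nat set" where
  "design_set d E x = {j. j \<le> d \<and> E j *v x = 0}"

end

theory Submission imports Defs begin

definition flat :: "complex^'x::finite^'x \<Rightarrow> complex^('x\<times>'x)" where
  "flat M = (\<chi> p. M $ fst p $ snd p)"

lemma flat_inj: "flat M = flat N \<Longrightarrow> M = N"
  unfolding flat_def by (metis (no_types, lifting) fst_conv snd_conv vec_eq_iff vec_lambda_beta)

lemma flat_component: "flat M $ (a,b) = M $ a $ b"
  unfolding flat_def by simp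

lemma flat_zero: "flat 0 = 0" by (simp add: flat_def vec_eq_iff)

lemma comb_mult:
  fixes E :: "nat \<Rightarrow> complex^'x::finite^'x"
  assumes orth: "\<forall>i\<le>d. \<forall>j\<le>d. E i ** E j = (if i = j then E i else 0)" and m: "m \<le> d"
  shows "(\<chi> a b. \<Sum>l\<le>d. c l * E l $ a $ b) ** E m = (\<chi> a b. c m * E m $ a $ b)"
proof -
  have "(\<Sum>k\<in>UNIV. (\<Sum>l\<le>d. c l * E l $ a $ k) * E m $ k $ b) = c m * E m $ a $ b" for a b
  proof -
    have "(\<Sum>k\<in>UNIV. (\<Sum>l\<le>d. c l * E l $ a $ k) * E m $ k $ b)
        = (\<Sum>l\<le>d. c l * (E l ** E m) $ a $ b)"
      by (simp add: matrix_matrix_mult_def sum_distrib_left sum_distrib_right mult.assoc sum.swap[of _ UNIV])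
    also have "\<dots> = (\<Sum>l\<le>d. if l = m then c m * E m $ a $ b else 0)"
      by (rule sum.cong) (use orth m in auto)
    also have "\<dots> = c m * E m $ a $ b" using m by simp
    finally show ?thesis .
  qed
  then show ?thesis by (simp add: matrix_matrix_mult_def vec_eq_iff)
qed

lemma span_lemma:
  fixes E A :: "nat \<Rightarrow> complex^'x::finite^'x" and W :: "nat \<Rightarrow> nat \<Rightarrow> complex"
  assumes orth: "\<forall>i\<le>d. \<forall>j\<le>d. E i ** E j = (if i = j then E i else 0)"
    and nz: "\<forall>j\<le>d. E j \<noteq> 0"
    and EA: "\<forall>j\<le>d. \<forall>a b. E j $ a $ b = (\<Sum>i\<le>d. W i j * A i $ a $ b)"
  shows "\<exists>c. \<forall>a b. (\<Sum>i\<le>d. w i * A i $ a $ b) = (\<Sum>l\<le>d. c l * E l $ a $ b)"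
proof -
  define SA where "SA = (\<lambda>i. flat (A i)) ` {..d}"
  define SE where "SE = (\<lambda>i. flat (E i)) ` {..d}"
  have injE: "inj_on (\<lambda>i. flat (E i)) {..d}"
  proof (rule inj_onI)
    fix i j assume ij: "i \<in> {..d}" "j \<in> {..d}" "flat (E i) = flat (E j)"
    then have "E i = E j" using flat_inj by blast
    show "i = j"
    proof (rule ccontr)
      assume "i \<noteq> j"
      then have "E i ** E j = 0" using orth ij by auto
      moreover have "E i ** E i = E i" using orth ij by auto
      ultimately show False using \<open>E i = E j\<close> nz ij by auto
    qed
  qed
  have flat_sum: "flat (\<chi> a b. \<Sum>i\<le>d. u i * M i $ a $ b) = (\<Sum>i\<le>d. u i *s flat (M i))" for u M
    by (simp add: vec_eq_iff flat_def)
  have SE_sub: "SE \<subseteq> vec.span SA"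
  proof
    fix v assume "v \<in> SE"
    then obtain j where j: "j \<le> d" "v = flat (E j)" unfolding SE_def by auto
    have "E j = (\<chi> a b. \<Sum>i\<le>d. W i j * A i $ a $ b)" using EA j by (simp add: vec_eq_iff)
    then have "v = flat (\<chi> a b. \<Sum>i\<le>d. W i j * A i $ a $ b)" using j by simp
    also have "\<dots> = (\<Sum>i\<le>d. W i j *s flat (A i))" by (rule flat_sum)
    also have "\<dots> \<in> vec.span SA"
      by (intro vec.span_sum vec.span_scale vec.span_base) (auto simp: SA_def)
    finally show "v \<in> vec.span SA" .
  qed
  have indep: "vec.independent SE"
    unfolding vec.independent_explicit
  proof (intro conjI allI impI ballI)
    show "finite SE" unfolding SE_def by simp
    fix c v assume s: "(\<Sum>v\<in>SE. c v *s v) = 0" and v: "v \<in> SE"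
    then obtain m where m: "m \<le> d" "v = flat (E m)" unfolding SE_def by auto
    have "(\<Sum>v\<in>SE. c v *s v) = (\<Sum>l\<le>d. c (flat (E l)) *s flat (E l))"
      unfolding SE_def by (simp add: sum.reindex[OF injE])
    also have "\<dots> = flat (\<chi> a b. \<Sum>l\<le>d. c (flat (E l)) * E l $ a $ b)"
      by (rule flat_sum[of "\<lambda>l. c (flat (E l))" E, symmetric])
    finally have "flat (\<chi> a b. \<Sum>l\<le>d. c (flat (E l)) * E l $ a $ b) = flat 0"
      using s flat_zero by simp
    then have "(\<chi> a b. \<Sum>l\<le>d. c (flat (E l)) * E l $ a $ b) = 0"
      by (rule flat_inj)
    then have "(\<chi> a b. c (flat (E m)) * E m $ a $ b) = 0"
      using comb_mult[OF orth m(1), of "\<lambda>l. c (flat (E l))"] by simp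
    then have "c (flat (E m)) = 0 \<or> E m = 0" by (auto simp: vec_eq_iff)
    then show "c v = 0" using nz m by auto
  qed
  have "vec.dim (vec.span SA) \<le> card SA"
    by (rule vec.dim_le_card) (auto simp: SA_def)
  also have "\<dots> \<le> card SE" unfolding SA_def SE_def
    using card_image_le[of "{..d}" "\<lambda>i. flat (A i)"] card_image[OF injE] by simp
  finally have "vec.span SA \<subseteq> vec.span SE"
    using vec.card_ge_dim_independent[OF SE_sub indep] by simp
  moreover have "flat (\<chi> a b. \<Sum>i\<le>d. w i * A i $ a $ b) \<in> vec.span SA"
    unfolding flat_sum[of w A]
    by (intro vec.span_sum vec.span_scale vec.span_base) (auto simp: SA_def)
  ultimately have "flat (\<chi> a b. \<Sum>i\<le>d. w i * A i $ a $ b) \<in> vec.span SE" by auto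
  then obtain u where u: "flat (\<chi> a b. \<Sum>i\<le>d. w i * A i $ a $ b) = (\<Sum>v\<in>SE. u v *s v)"
    using vec.span_finite[of SE] unfolding SE_def by auto
  also have "\<dots> = flat (\<chi> a b. \<Sum>l\<le>d. u (flat (E l)) * E l $ a $ b)"
    unfolding SE_def by (simp add: sum.reindex[OF injE] flat_sum[of "\<lambda>l. u (flat (E l))" E])
  finally have "(\<chi> a b. \<Sum>i\<le>d. w i * A i $ a $ b) = (\<chi> a b. \<Sum>l\<le>d. u (flat (E l)) * E l $ a $ b)"
    by (rule flat_inj)
  then show ?thesis by (intro exI[of _ "\<lambda>l. u (flat (E l))"]) (simp add: vec_eq_iff)
qed


definition smat :: "complex \<Rightarrow> complex^'x::finite^'x \<Rightarrow> complex^'x^'x" where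
  "smat c M = (\<chi> a b. c * M $ a $ b)"

definition cT :: "complex^'x::finite^'x \<Rightarrow> complex^'x^'x" where
  "cT M = (\<chi> a b. cnj (M $ b $ a))"

lemma smat_component[simp]: "smat c M $ a $ b = c * M $ a $ b"
  by (simp add: smat_def)

lemma cT_component[simp]: "cT M $ a $ b = cnj (M $ b $ a)"
  by (simp add: cT_def)

lemma mult_smat: "M ** smat c N = smat c (M ** N)"
  by (simp add: vec_eq_iff matrix_matrix_mult_def sum_distrib_left mult.left_commute)

lemma smat_mult: "smat c M ** N = smat c (M ** N)"
  by (simp add: vec_eq_iff matrix_matrix_mult_def sum_distrib_left mult.assoc)

lemma smat_smat: "smat c (smat e M) = smat (c * e) M"
  by (simp add: vec_eq_iff mult.assoc)

lemma cT_mult: "cT (M ** N) = cT N ** cT M"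
  by (simp add: vec_eq_iff matrix_matrix_mult_def mult.commute)

lemma smat_eq_cancel:
  assumes "smat c M = smat e M" "M \<noteq> 0" shows "c = e"
proof -
  from assms(2) obtain a b where "M $ a $ b \<noteq> 0" by (metis vec_eq_iff zero_index)
  moreover have "c * M $ a $ b = e * M $ a $ b" using assms(1) by (metis smat_component)
  ultimately show ?thesis by simp
qed

lemma smat_eq_self:
  assumes "smat c M = M" "M \<noteq> 0" shows "c = 1"
proof -
  have "smat c M = smat 1 M" using assms(1) by (simp add: vec_eq_iff)
  then show ?thesis using smat_eq_cancel assms(2) by blast
qed

lemma sum_cnj_zero:
  fixes f :: "'a \<Rightarrow> complex"
  assumes "finite S" "(\<Sum>a\<in>S. cnj (f a) * f a) = 0" "a \<in> S"
  shows "f a = 0"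
proof -
  have t: "cnj (f a) * f a = of_real ((norm (f a))\<^sup>2)" for a
    by (simp only: complex_norm_square mult.commute)
  have "(\<Sum>a\<in>S. cnj (f a) * f a) = of_real (\<Sum>a\<in>S. (norm (f a))\<^sup>2)"
    by (simp only: t of_real_sum)
  then have "complex_of_real (\<Sum>a\<in>S. (norm (f a))\<^sup>2) = 0" using assms(2) by simp
  then have "(\<Sum>a\<in>S. (norm (f a))\<^sup>2) = 0" by (simp only: of_real_eq_0_iff)
  then have "(norm (f a))\<^sup>2 = 0" using sum_nonneg_eq_0_iff[of S "\<lambda>a. (norm (f a))\<^sup>2"] assms(1,3) by simp
  then show ?thesis by simp
qed

lemma swap_helper:
  fixes w :: "'i \<Rightarrow> 'a::comm_semiring_1"
  shows "(\<Sum>i\<in>I. w i * (\<Sum>l\<in>L. c i l * e l)) = (\<Sum>l\<in>L. (\<Sum>i\<in>I. w i * c i l) * e l)"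
  by (simp add: sum_distrib_left sum_distrib_right mult.assoc) (rule sum.swap)

lemma matrix_sub_rdistrib: "((X::complex^'n::finite^'m::finite) - Y) ** (Z::complex^'p::finite^'n) = X ** Z - Y ** Z"
  by (simp add: vec_eq_iff matrix_matrix_mult_def sum_subtractf left_diff_distrib)

lemma matrix_mul_sum_right:
  fixes M :: "complex^'n::finite^'m::finite" and N :: "'i \<Rightarrow> complex^'p::finite^'n"
  shows "finite S \<Longrightarrow> M ** (\<Sum>l\<in>S. N l) = (\<Sum>l\<in>S. M ** N l)"
  by (induct S rule: finite_induct) (simp_all add: matrix_add_ldistrib)

lemma sf_basic:
  assumes "is_subfield K"
  shows "0 \<in> K" "1 \<in> K" "x \<in> K \<Longrightarrow> y \<in> K \<Longrightarrow> x + y \<in> K" "x \<in> K \<Longrightarrow> y \<in> K \<Longrightarrow> x * y \<in> K"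
    "x \<in> K \<Longrightarrow> - x \<in> K" "x \<in> K \<Longrightarrow> inverse x \<in> K" "x \<in> K \<Longrightarrow> y \<in> K \<Longrightarrow> x - y \<in> K"
proof -
  show "0 \<in> K" using assms unfolding is_subfield_def by blast
  show "1 \<in> K" using assms unfolding is_subfield_def by blast
  show "x \<in> K \<Longrightarrow> y \<in> K \<Longrightarrow> x + y \<in> K" using assms unfolding is_subfield_def by blast
  show "x \<in> K \<Longrightarrow> y \<in> K \<Longrightarrow> x * y \<in> K" using assms unfolding is_subfield_def by blast
  show "x \<in> K \<Longrightarrow> - x \<in> K" using assms unfolding is_subfield_def by blast
  show "x \<in> K \<Longrightarrow> inverse x \<in> K" using assms unfolding is_subfield_def by blast
  show "x \<in> K \<Longrightarrow> y \<in> K \<Longrightarrow> x - y \<in> K"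
  proof -
    assume "x \<in> K" "y \<in> K"
    then have "x + - y \<in> K" using assms unfolding is_subfield_def by blast
    then show "x - y \<in> K" by simp
  qed
qed

lemma sf_sum:
  assumes K: "is_subfield K" and f: "\<forall>x\<in>S. f x \<in> K"
  shows "sum f S \<in> K"
proof (cases "finite S")
  case True
  then show ?thesis using f by (induct S rule: finite_induct) (simp_all add: sf_basic(1)[OF K] sf_basic(3)[OF K])
next
  case False
  then show ?thesis using sf_basic(1)[OF K] by simp
qed

lemma sum_cnj_zero_UNIV:
  fixes f :: "'a::finite \<Rightarrow> complex"
  assumes "(\<Sum>a\<in>UNIV. cnj (f a) * f a) = 0"
  shows "f a = 0"
  using sum_cnj_zero[OF finite_class.finite_UNIV assms UNIV_I] .

locale AS =
  fixes d :: nat and E A :: "nat \<Rightarrow> complex^'x::finite^'x" and W :: "nat \<Rightarrow> nat \<Rightarrow> complex"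
  assumes orth: "\<forall>i\<le>d. \<forall>j\<le>d. E i ** E j = (if i = j then E i else 0)"
    and nz: "\<forall>j\<le>d. E j \<noteq> 0"
    and sumI: "(\<Sum>j\<le>d. E j) = mat 1"
    and EA: "\<forall>j\<le>d. \<forall>a b. E j $ a $ b = (\<Sum>i\<le>d. W i j * A i $ a $ b)"
    and A0: "A 0 = mat 1"
    and Atr: "\<forall>i\<le>d. \<exists>i'\<le>d. \<forall>a b. A i $ b $ a = A i' $ a $ b"
    and Areal: "\<forall>i a b. cnj (A i $ a $ b) = A i $ a $ b"
begin

lemma E_idem: "j \<le> d \<Longrightarrow> E j ** E j = E j" using orth by auto
lemma E_orth: "j \<le> d \<Longrightarrow> k \<le> d \<Longrightarrow> j \<noteq> k \<Longrightarrow> E j ** E k = 0" using orth by auto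

lemma comb: "\<exists>c. \<forall>a b. (\<Sum>i\<le>d. w i * A i $ a $ b) = (\<Sum>l\<le>d. c l * E l $ a $ b)"
  using span_lemma[OF orth nz EA] .

lemma comb_E: "m \<le> d \<Longrightarrow> (\<forall>a b. M $ a $ b = (\<Sum>l\<le>d. c l * E l $ a $ b)) \<Longrightarrow> M ** E m = smat (c m) (E m)"
proof -
  assume m: "m \<le> d" and M: "\<forall>a b. M $ a $ b = (\<Sum>l\<le>d. c l * E l $ a $ b)"
  have "M = (\<chi> a b. \<Sum>l\<le>d. c l * E l $ a $ b)" using M by (simp add: vec_eq_iff)
  then show ?thesis using comb_mult[OF orth m, of c] by (simp add: smat_def)
qed

lemma A_comb: "\<exists>C. \<forall>k\<le>d. \<forall>a b. A k $ a $ b = (\<Sum>l\<le>d. C k l * E l $ a $ b)"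
proof -
  have "\<exists>c. \<forall>a b. A k $ a $ b = (\<Sum>l\<le>d. c l * E l $ a $ b)" if "k \<le> d" for k
  proof -
    obtain c where c: "\<forall>a b. (\<Sum>i\<le>d. (if i = k then 1 else 0) * A i $ a $ b) = (\<Sum>l\<le>d. c l * E l $ a $ b)"
      using comb[of "\<lambda>i. if i = k then 1 else 0"] by blast
    have "(\<Sum>i\<le>d. (if i = k then 1 else 0) * A i $ a $ b) = A k $ a $ b" for a b
    proof -
      have "(\<Sum>i\<le>d. (if i = k then 1 else 0) * A i $ a $ b) = (\<Sum>i\<le>d. if i = k then A i $ a $ b else 0)"
        by (rule sum.cong) auto
      then show ?thesis using that by simp
    qed
    then show ?thesis using c by (intro exI[of _ c] allI) metis
  qed
  then have "\<forall>k\<in>{..d}. \<exists>c. \<forall>a b. A k $ a $ b = (\<Sum>l\<le>d. c l * E l $ a $ b)" by simp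
  from bchoice[OF this] obtain C where "\<forall>k\<in>{..d}. \<forall>a b. A k $ a $ b = (\<Sum>l\<le>d. C k l * E l $ a $ b)"
    by blast
  then show ?thesis by auto
qed


definition C where "C = (SOME C. \<forall>k\<le>d. \<forall>a b. A k $ a $ b = (\<Sum>l\<le>d. C k l * E l $ a $ b))"

lemma C_prop: "\<forall>k\<le>d. \<forall>a b. A k $ a $ b = (\<Sum>l\<le>d. C k l * E l $ a $ b)"
  unfolding C_def using someI_ex[OF A_comb] .

lemma A_E: "k \<le> d \<Longrightarrow> l \<le> d \<Longrightarrow> A k ** E l = smat (C k l) (E l)"
  using comb_E C_prop by blast

lemma lin_E:
  assumes M: "\<forall>a b. M $ a $ b = (\<Sum>i\<le>d. w i * A i $ a $ b)" and l: "l \<le> d"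
  shows "M ** E l = smat (\<Sum>i\<le>d. w i * C i l) (E l)"
proof -
  have "M $ a $ b = (\<Sum>m\<le>d. (\<Sum>i\<le>d. w i * C i m) * E m $ a $ b)" for a b
  proof -
    have "M $ a $ b = (\<Sum>i\<le>d. w i * (\<Sum>m\<le>d. C i m * E m $ a $ b))"
      using M C_prop by simp
    also have "\<dots> = (\<Sum>m\<le>d. (\<Sum>i\<le>d. w i * C i m) * E m $ a $ b)"
      by (rule swap_helper)
    finally show ?thesis .
  qed
  then show ?thesis using comb_E[OF l, of M "\<lambda>m. \<Sum>i\<le>d. w i * C i m"] by blast
qed

lemma herm:
  assumes j: "j \<le> d" shows "cT (E j) ** E j = E j"
proof -
  have "\<forall>i\<in>{..d}. \<exists>i'. i' \<le> d \<and> (\<forall>a b. A i $ b $ a = A i' $ a $ b)" using Atr atMost_iff by blast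
  from bchoice[OF this] obtain \<pi> where \<pi>0: "\<forall>i\<in>{..d}. \<pi> i \<le> d \<and> (\<forall>a b. A i $ b $ a = A (\<pi> i) $ a $ b)"
    by blast
  then have \<pi>: "\<forall>i\<le>d. \<pi> i \<le> d \<and> (\<forall>a b. A i $ b $ a = A (\<pi> i) $ a $ b)" using atMost_iff by blast
  define F where "F = cT (E j)"
  define f where "f l = (\<Sum>i\<le>d. cnj (W i j) * C (\<pi> i) l)" for l
  have Fc: "F $ a $ b = (\<Sum>l\<le>d. f l * E l $ a $ b)" for a b
  proof -
    have "F $ a $ b = cnj (\<Sum>i\<le>d. W i j * A i $ b $ a)"
      unfolding F_def using EA j by simp
    also have "\<dots> = (\<Sum>i\<le>d. cnj (W i j) * A i $ b $ a)"
      using Areal by simp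
    also have "\<dots> = (\<Sum>i\<le>d. cnj (W i j) * (\<Sum>l\<le>d. C (\<pi> i) l * E l $ a $ b))"
    proof (rule sum.cong)
      fix i assume "i \<in> {..d}"
      then have i: "i \<le> d" by simp
      have "A i $ b $ a = A (\<pi> i) $ a $ b" using \<pi> i by blast
      also have "\<dots> = (\<Sum>l\<le>d. C (\<pi> i) l * E l $ a $ b)" using C_prop \<pi> i by blast
      finally show "cnj (W i j) * A i $ b $ a = cnj (W i j) * (\<Sum>l\<le>d. C (\<pi> i) l * E l $ a $ b)"
        by simp
    qed simp
    also have "\<dots> = (\<Sum>l\<le>d. f l * E l $ a $ b)"
      unfolding f_def by (rule swap_helper)
    finally show ?thesis .
  qed
  have FE: "F ** E m = smat (f m) (E m)" if "m \<le> d" for m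
    using comb_E[OF that, of F f] Fc by blast
  have FF: "F ** F = F"
  proof -
    have "F ** F = cT (E j ** E j)" unfolding F_def by (rule cT_mult[symmetric])
    also have "\<dots> = F" unfolding F_def using E_idem[OF j] by simp
    finally show ?thesis .
  qed
  have "smat (f j * f j) (E j) = F ** (F ** E j)"
    using FE[OF j] by (simp add: mult_smat smat_smat)
  also have "\<dots> = F ** E j" by (simp add: matrix_mul_assoc FF)
  also have "\<dots> = smat (f j) (E j)" using FE[OF j] .
  finally have ff: "f j * f j = f j" using smat_eq_cancel nz j by blast
  have "f j \<noteq> 0"
  proof
    assume f0: "f j = 0"
    then have "F ** E j = 0" using FE[OF j] by (simp add: vec_eq_iff)
    then have "(F ** E j) $ b $ b = 0" for b by simp
    then have "(\<Sum>a\<in>UNIV. cnj (E j $ a $ b) * E j $ a $ b) = 0" for b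
      unfolding F_def by (simp add: matrix_matrix_mult_def)
    then have "E j $ a $ b = 0" for a b
      by (rule sum_cnj_zero_UNIV[where f="\<lambda>a. E j $ a $ b"])
    then have "E j = 0" by (simp add: vec_eq_iff)
    then show False using nz j by simp
  qed
  then have "f j = 1" using ff by (metis mult_cancel_right2)
  then show ?thesis using FE[OF j] unfolding F_def by (simp add: vec_eq_iff)
qed

lemma sum3_swap:
  fixes g :: "'a \<Rightarrow> 'b \<Rightarrow> 'c \<Rightarrow> 'd::comm_monoid_add"
  shows "(\<Sum>a\<in>SA. \<Sum>b\<in>SB. \<Sum>m\<in>SM. g a b m) = (\<Sum>m\<in>SM. \<Sum>a\<in>SA. \<Sum>b\<in>SB. g a b m)"
proof -
  have "(\<Sum>a\<in>SA. \<Sum>b\<in>SB. \<Sum>m\<in>SM. g a b m) = (\<Sum>a\<in>SA. \<Sum>m\<in>SM. \<Sum>b\<in>SB. g a b m)"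
    by (rule sum.cong[OF refl], rule sum.swap)
  also have "\<dots> = (\<Sum>m\<in>SM. \<Sum>a\<in>SA. \<Sum>b\<in>SB. g a b m)" by (rule sum.swap)
  finally show ?thesis .
qed

lemma quad:
  assumes j: "j \<le> d" and xr: "\<forall>a. cnj (x $ a) = x $ a"
  shows "(\<Sum>a\<in>UNIV. \<Sum>b\<in>UNIV. x $ a * E j $ a $ b * x $ b)
       = (\<Sum>m\<in>UNIV. cnj ((E j *v x) $ m) * (E j *v x) $ m)"
proof -
  have Ej: "(\<Sum>m\<in>UNIV. cnj (E j $ m $ a) * E j $ m $ b) = E j $ a $ b" for a b
  proof -
    have "(cT (E j) ** E j) $ a $ b = E j $ a $ b" using herm[OF j] by simp
    then show ?thesis by (simp add: matrix_matrix_mult_def)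
  qed
  have "(\<Sum>a\<in>UNIV. \<Sum>b\<in>UNIV. x $ a * E j $ a $ b * x $ b)
      = (\<Sum>a\<in>UNIV. \<Sum>b\<in>UNIV. x $ a * (\<Sum>m\<in>UNIV. cnj (E j $ m $ a) * E j $ m $ b) * x $ b)"
    by (simp only: Ej)
  also have "\<dots> = (\<Sum>a\<in>UNIV. \<Sum>b\<in>UNIV. \<Sum>m\<in>UNIV. (cnj (E j $ m $ a) * x $ a) * (E j $ m $ b * x $ b))"
    by (simp add: sum_distrib_left sum_distrib_right mult_ac)
  also have "\<dots> = (\<Sum>m\<in>UNIV. \<Sum>a\<in>UNIV. \<Sum>b\<in>UNIV. (cnj (E j $ m $ a) * x $ a) * (E j $ m $ b * x $ b))"
    by (rule sum3_swap)
  also have "\<dots> = (\<Sum>m\<in>UNIV. (\<Sum>a\<in>UNIV. cnj (E j $ m $ a) * x $ a) * (\<Sum>b\<in>UNIV. E j $ m $ b * x $ b))"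
    by (simp only: sum_product)
  also have "\<dots> = (\<Sum>m\<in>UNIV. cnj ((E j *v x) $ m) * (E j *v x) $ m)"
    using xr by (simp add: matrix_vector_mult_def)
  finally show ?thesis .
qed


lemma C_0: "l \<le> d \<Longrightarrow> C 0 l = 1"
proof -
  assume l: "l \<le> d"
  have "A 0 ** E l = smat (C 0 l) (E l)" using A_E[of 0 l] l by simp
  then have "smat (C 0 l) (E l) = E l" using A0 by simp
  then show ?thesis using smat_eq_self nz l by blast
qed

lemma C_eig:
  assumes i: "i \<le> d" and l: "l \<le> d"
  shows "\<exists>v. v \<noteq> 0 \<and> A i *v v = C i l *s v"
proof -
  from nz l obtain a0 b0 where ab: "E l $ a0 $ b0 \<noteq> 0" by (metis vec_eq_iff zero_index)
  define v where "v = (\<chi> a. E l $ a $ b0)"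
  have "v $ a0 \<noteq> 0" using ab unfolding v_def by simp
  then have "v \<noteq> 0" by auto
  moreover have "A i *v v = C i l *s v"
  proof -
    have "(A i ** E l) $ a $ b0 = C i l * E l $ a $ b0" for a
      using A_E[OF i l] by simp
    then show ?thesis unfolding v_def by (simp add: vec_eq_iff matrix_vector_mult_def matrix_matrix_mult_def)
  qed
  ultimately show ?thesis by blast
qed

lemma sep:
  assumes j: "j \<le> d" and k: "k \<le> d" and jk: "j \<noteq> k"
  shows "\<exists>i\<le>d. C i j \<noteq> C i k"
proof (rule ccontr)
  assume "\<not> ?thesis"
  then have eq: "\<forall>i\<le>d. C i j = C i k" by auto
  define s where "s = (\<Sum>i\<le>d. W i j * C i j)"
  have EjA: "\<forall>a b. E j $ a $ b = (\<Sum>i\<le>d. W i j * A i $ a $ b)" using EA j by blast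
  have "E j ** E j = smat s (E j)" unfolding s_def using lin_E[of "E j" "\<lambda>i. W i j" j, OF EjA j] .
  then have "smat s (E j) = E j" using E_idem[OF j] by simp
  then have "s = 1" using smat_eq_self nz j by blast
  have "(\<Sum>i\<le>d. W i j * C i k) = s" unfolding s_def using eq by simp
  moreover have "E j ** E k = smat (\<Sum>i\<le>d. W i j * C i k) (E k)" using lin_E[of "E j" "\<lambda>i. W i j" k, OF EjA k] .
  ultimately have "E j ** E k = smat s (E k)" by simp
  then have "E j ** E k = E k" using \<open>s = 1\<close> by (simp add: vec_eq_iff)
  then show False using E_orth[OF j k jk] nz k by simp
qed

lemma build:
  assumes K: "is_subfield K" and CK: "\<forall>i\<le>d. \<forall>l\<le>d. C i l \<in> K"
    and AK: "\<forall>i a b. A i $ a $ b \<in> K" and j: "j \<le> d" and fin: "finite S"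
  shows "S \<subseteq> {..d} - {j} \<Longrightarrow> \<exists>M. (\<forall>a b. M $ a $ b \<in> K) \<and>
     (\<forall>l\<le>d. \<exists>c. M ** E l = smat c (E l) \<and> (l \<in> S \<longrightarrow> c = 0) \<and> (l = j \<longrightarrow> c = 1))"
  using fin
proof (induct S rule: finite_induct)
  case empty
  have m1: "\<forall>a b. mat 1 $ a $ b \<in> K" using sf_basic[OF K] by (simp add: mat_def)
  have "mat 1 ** E l = smat 1 (E l)" for l by (simp add: vec_eq_iff)
  then have m2: "\<forall>l\<le>d. \<exists>c. mat 1 ** E l = smat c (E l) \<and> (l \<in> {} \<longrightarrow> c = 0) \<and> (l = j \<longrightarrow> c = 1)"
    by (intro allI impI exI[of _ 1]) simp
  show ?case by (rule exI[of _ "mat 1"], rule conjI, rule m1, rule m2)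
next
  case (insert k S)
  have Ssub: "S \<subseteq> {..d} - {j}" using insert.prems by blast
  have "k \<in> {..d} - {j}" using insert.prems by blast
  then have k: "k \<le> d" "j \<noteq> k" by auto
  obtain M where MK: "\<forall>a b. M $ a $ b \<in> K"
    and ME: "\<forall>l\<le>d. \<exists>c. M ** E l = smat c (E l) \<and> (l \<in> S \<longrightarrow> c = 0) \<and> (l = j \<longrightarrow> c = 1)"
    using insert.hyps(3)[OF Ssub] by blast
  obtain i where i: "i \<le> d" "C i j \<noteq> C i k" using sep[OF j k(1) k(2)] by blast
  define D where "D = C i j - C i k"
  have D: "D \<noteq> 0" using i unfolding D_def by simp
  define L where "L = smat (inverse D) (A i - smat (C i k) (mat 1))"
  have LE: "L ** E l = smat ((C i l - C i k) * inverse D) (E l)" if l: "l \<le> d" for l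
  proof -
    have "L ** E l = smat (inverse D) (A i ** E l - smat (C i k) (mat 1 ** E l))"
      unfolding L_def by (simp add: smat_mult matrix_sub_rdistrib)
    also have "\<dots> = smat ((C i l - C i k) * inverse D) (E l)"
      using A_E[OF i(1) l] by (simp add: vec_eq_iff algebra_simps)
    finally show ?thesis .
  qed
  have LK: "\<forall>a b. L $ a $ b \<in> K"
  proof (intro allI)
    fix a b
    have "L $ a $ b = inverse D * (A i $ a $ b - C i k * (if a = b then 1 else 0))"
      unfolding L_def by (simp add: mat_def)
    moreover have "C i k \<in> K" "C i j \<in> K" using CK i k j by auto
    ultimately show "L $ a $ b \<in> K" unfolding D_def using AK sf_basic[OF K] by simp
  qed
  have LMK: "\<forall>a b. (L ** M) $ a $ b \<in> K"
  proof (intro allI)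
    fix a b
    have "\<forall>m\<in>UNIV. L $ a $ m * M $ m $ b \<in> K" using LK MK sf_basic(4)[OF K] by blast
    then have "(\<Sum>m\<in>UNIV. L $ a $ m * M $ m $ b) \<in> K" by (rule sf_sum[OF K])
    then show "(L ** M) $ a $ b \<in> K" by (simp add: matrix_matrix_mult_def)
  qed
  have LME: "\<forall>l\<le>d. \<exists>c. (L ** M) ** E l = smat c (E l) \<and> (l \<in> insert k S \<longrightarrow> c = 0) \<and> (l = j \<longrightarrow> c = 1)"
  proof (intro allI impI)
    fix l assume l: "l \<le> d"
    obtain c where c: "M ** E l = smat c (E l)" "l \<in> S \<longrightarrow> c = 0" "l = j \<longrightarrow> c = 1"
      using ME l by blast
    have "(L ** M) ** E l = L ** (M ** E l)" by (rule matrix_mul_assoc[symmetric])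
    also have "\<dots> = L ** smat c (E l)" using c(1) by simp
    also have "\<dots> = smat c (L ** E l)" by (rule mult_smat)
    also have "\<dots> = smat c (smat ((C i l - C i k) * inverse D) (E l))" using LE[OF l] by simp
    also have "\<dots> = smat (c * ((C i l - C i k) * inverse D)) (E l)" by (rule smat_smat)
    finally have "(L ** M) ** E l = smat (c * ((C i l - C i k) * inverse D)) (E l)" .
    moreover have "l \<in> insert k S \<longrightarrow> c * ((C i l - C i k) * inverse D) = 0" using c by auto
    moreover have "l = j \<longrightarrow> c * ((C i l - C i k) * inverse D) = 1" using c D unfolding D_def by auto
    ultimately show "\<exists>c. (L ** M) ** E l = smat c (E l) \<and> (l \<in> insert k S \<longrightarrow> c = 0) \<and> (l = j \<longrightarrow> c = 1)"
      by blast
  qed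
  show ?case by (rule exI[of _ "L ** M"], rule conjI, rule LMK, rule LME)
qed

lemma E_in_K:
  assumes K: "is_subfield K" and eig: "\<forall>i\<in>{1..d}. \<forall>\<mu> v. v \<noteq> 0 \<and> A i *v v = \<mu> *s v \<longrightarrow> \<mu> \<in> K"
    and AK: "\<forall>i a b. A i $ a $ b \<in> K" and j: "j \<le> d"
  shows "E j $ a $ b \<in> K"
proof -
  have CK: "\<forall>i\<le>d. \<forall>l\<le>d. C i l \<in> K"
  proof (intro allI impI)
    fix i l assume i: "i \<le> d" and l: "l \<le> d"
    show "C i l \<in> K"
    proof (cases "i = 0")
      case True then show ?thesis using C_0[OF l] sf_basic[OF K] by simp
    next
      case False
      then have i1: "i \<in> {1..d}" using i by simp
      obtain v where v: "v \<noteq> 0" "A i *v v = C i l *s v" using C_eig[OF i l] by blast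
      have "v \<noteq> 0 \<and> A i *v v = C i l *s v" using v by simp
      then show ?thesis using eig[rule_format, OF i1, where \<mu>="C i l" and v=v] by blast
    qed
  qed
  have "\<exists>M. (\<forall>a b. M $ a $ b \<in> K) \<and>
     (\<forall>l\<le>d. \<exists>c. M ** E l = smat c (E l) \<and> (l \<in> {..d} - {j} \<longrightarrow> c = 0) \<and> (l = j \<longrightarrow> c = 1))"
    by (rule build[OF K CK AK j]) auto
  then obtain M where MK: "\<forall>a b. M $ a $ b \<in> K"
    and ME: "\<forall>l\<le>d. \<exists>c. M ** E l = smat c (E l) \<and> (l \<in> {..d} - {j} \<longrightarrow> c = 0) \<and> (l = j \<longrightarrow> c = 1)"
    by blast
  have "M ** E l = (if l = j then E j else 0)" if "l \<le> d" for l
  proof -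
    have "\<exists>c. M ** E l = smat c (E l) \<and> (l \<in> {..d} - {j} \<longrightarrow> c = 0) \<and> (l = j \<longrightarrow> c = 1)"
      using ME[rule_format, OF that] .
    then obtain c where "M ** E l = smat c (E l)" "l \<in> {..d} - {j} \<longrightarrow> c = 0" "l = j \<longrightarrow> c = 1"
      by blast
    then show ?thesis using that by (cases "l = j") (simp_all add: vec_eq_iff)
  qed
  then have ME': "(\<Sum>l\<le>d. M ** E l) = (\<Sum>l\<le>d. if l = j then E j else 0)"
    by (intro sum.cong) auto
  have "M = M ** (\<Sum>l\<le>d. E l)" using sumI by simp
  also have "\<dots> = (\<Sum>l\<le>d. M ** E l)" by (rule matrix_mul_sum_right) simp
  also have "\<dots> = (\<Sum>l\<le>d. if l = j then E j else 0)" by (rule ME')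
  also have "\<dots> = E j" using j by simp
  finally have "M = E j" .
  then show ?thesis using MK[rule_format, of a b] by simp
qed

end


lemma sf_nat: "is_subfield K \<Longrightarrow> of_nat n \<in> K"
  by (induct n) (simp_all add: sf_basic)

lemma sf_int: "is_subfield K \<Longrightarrow> of_int z \<in> K"
proof (cases "z \<ge> 0")
  case True
  assume K: "is_subfield K"
  then show ?thesis using True sf_nat[OF K, of "nat z"] by simp
next
  case False
  assume K: "is_subfield K"
  have "of_int z = - (of_nat (nat (- z)) :: complex)" using False by simp
  then show ?thesis using sf_basic(5)[OF K sf_nat[OF K, of "nat (- z)"]] by simp
qed

lemma sf_rat: assumes K: "is_subfield K" and q: "q \<in> \<rat>" shows "q \<in> K"
proof -
  obtain a b where "q = of_int a / of_int b" using Rats_cases'[OF q] by blast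
  then have "q = of_int a * inverse (of_int b)" by (simp add: divide_inverse)
  then show ?thesis using sf_int[OF K] sf_basic[OF K] by simp
qed

lemma gal_facts:
  assumes g: "gal_aut K \<sigma>" and K: "is_subfield K"
  shows "\<sigma> 0 = 0" "\<sigma> 1 = 1" "\<And>x. x \<in> K \<Longrightarrow> \<sigma> (- x) = - \<sigma> x"
    "\<And>x. x \<in> K \<Longrightarrow> \<sigma> (inverse x) = inverse (\<sigma> x)"
proof -
  have add: "\<And>x y. x \<in> K \<Longrightarrow> y \<in> K \<Longrightarrow> \<sigma> (x + y) = \<sigma> x + \<sigma> y"
    and mul: "\<And>x y. x \<in> K \<Longrightarrow> y \<in> K \<Longrightarrow> \<sigma> (x * y) = \<sigma> x * \<sigma> y"
    using g unfolding gal_aut_def by auto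
  have inj: "inj_on \<sigma> K" using g unfolding gal_aut_def using bij_betw_imp_inj_on by blast
  have K0: "0 \<in> K" and K1: "1 \<in> K" using sf_basic[OF K] by auto
  have "\<sigma> (0 + 0) = \<sigma> 0 + \<sigma> 0" using add[OF K0 K0] .
  then show s0: "\<sigma> 0 = 0" by simp
  have "\<sigma> (1 * 1) = \<sigma> 1 * \<sigma> 1" using mul[OF K1 K1] .
  then have "\<sigma> 1 * \<sigma> 1 = \<sigma> 1" by simp
  moreover have "\<sigma> 1 \<noteq> 0"
  proof
    assume "\<sigma> 1 = 0"
    then have "\<sigma> 1 = \<sigma> 0" using s0 by simp
    then have "(1::complex) = 0" using inj K0 K1 unfolding inj_on_def by blast
    then show False by simp
  qed
  ultimately show s1: "\<sigma> 1 = 1" by (metis mult_cancel_right2)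
  show "\<sigma> (- x) = - \<sigma> x" if x: "x \<in> K" for x
  proof -
    have "\<sigma> (x + - x) = \<sigma> x + \<sigma> (- x)" using add[OF x sf_basic(5)[OF K x]] .
    then have "\<sigma> x + \<sigma> (- x) = 0" using s0 by simp
    then show ?thesis by (simp add: eq_neg_iff_add_eq_0 add.commute)
  qed
  show "\<sigma> (inverse x) = inverse (\<sigma> x)" if x: "x \<in> K" for x
  proof (cases "x = 0")
    case True then show ?thesis using s0 by simp
  next
    case False
    have "\<sigma> (x * inverse x) = \<sigma> x * \<sigma> (inverse x)" using mul[OF x sf_basic(6)[OF K x]] .
    then have "\<sigma> x * \<sigma> (inverse x) = 1" using s1 False by simp
    then show ?thesis by (metis inverse_unique)
  qed
qed

lemma gal_rat:
  assumes g: "gal_aut K \<sigma>" and K: "is_subfield K" and q: "q \<in> \<rat>"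
  shows "\<sigma> q = q"
proof -
  have add: "\<And>x y. x \<in> K \<Longrightarrow> y \<in> K \<Longrightarrow> \<sigma> (x + y) = \<sigma> x + \<sigma> y"
    and mul: "\<And>x y. x \<in> K \<Longrightarrow> y \<in> K \<Longrightarrow> \<sigma> (x * y) = \<sigma> x * \<sigma> y"
    using g unfolding gal_aut_def by auto
  have nat: "\<sigma> (of_nat n) = of_nat n" for n
  proof (induct n)
    case 0 then show ?case using gal_facts(1)[OF g K] by simp
  next
    case (Suc n)
    have "\<sigma> (1 + of_nat n) = \<sigma> 1 + \<sigma> (of_nat n)"
      using add[OF sf_basic(2)[OF K] sf_nat[OF K]] .
    then show ?case using Suc gal_facts(2)[OF g K] by simp
  qed
  have int: "\<sigma> (of_int z) = of_int z" for z
  proof (cases "z \<ge> 0")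
    case True
    then show ?thesis using nat[of "nat z"] by simp
  next
    case False
    have "of_int z = - (of_nat (nat (- z)) :: complex)" using False by simp
    then show ?thesis using gal_facts(3)[OF g K sf_nat[OF K, of "nat (- z)"]] nat[of "nat (- z)"] by simp
  qed
  obtain a b where "q = of_int a / of_int b" using Rats_cases'[OF q] by blast
  then have qe: "q = of_int a * inverse (of_int b)" by (simp add: divide_inverse)
  have "\<sigma> q = \<sigma> (of_int a) * \<sigma> (inverse (of_int b))"
    unfolding qe using mul[OF sf_int[OF K] sf_basic(6)[OF K sf_int[OF K]]] .
  also have "\<dots> = q" unfolding qe using int gal_facts(4)[OF g K sf_int[OF K]] by simp
  finally show ?thesis .
qed

lemma gal_sum:
  assumes g: "gal_aut K \<sigma>" and K: "is_subfield K" and f: "\<forall>x\<in>S. f x \<in> K" and fin: "finite S"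
  shows "\<sigma> (sum f S) = (\<Sum>x\<in>S. \<sigma> (f x))"
  using fin f
proof (induct S rule: finite_induct)
  case empty then show ?case using gal_facts(1)[OF g K] by simp
next
  case (insert y S)
  have add: "\<And>x y. x \<in> K \<Longrightarrow> y \<in> K \<Longrightarrow> \<sigma> (x + y) = \<sigma> x + \<sigma> y"
    using g unfolding gal_aut_def by auto
  have "f y \<in> K" "sum f S \<in> K" using insert.prems sf_sum[OF K, of S f] by auto
  then have "\<sigma> (f y + sum f S) = \<sigma> (f y) + \<sigma> (sum f S)" using add by blast
  then show ?case using insert by simp
qed

lemma splitting_subfield: "is_subfield (splitting_field d R)"
  unfolding splitting_field_def is_subfield_def by blast

lemma splitting_eig: "eigenvalues_nontriv d R \<subseteq> splitting_field d R"
  unfolding splitting_field_def by blast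


theorem theorem4p1:
  fixes d :: nat and R :: "'x::finite \<Rightarrow> 'x \<Rightarrow> nat"
    and E :: "nat \<Rightarrow> complex^'x^'x" and Q :: "nat \<Rightarrow> nat \<Rightarrow> complex"
    and x :: "complex^'x"
  assumes scheme: "comm_assoc_scheme d R"
    and idem: "prim_idempotents d R E Q"
    and rat: "\<forall>a. x $ a \<in> \<rat>"
    and nz: "x \<noteq> 0"
  shows
    "(\<forall>j\<in>design_set d E x. \<forall>\<sigma> k. gal_aut (splitting_field d R) \<sigma> \<and> k \<le> d \<and>
          mat_map \<sigma> (E j) = E k \<longrightarrow> k \<in> design_set d E x)
     \<and> (\<forall>j\<in>design_set d E x. gal_orbit d R E j \<subseteq> design_set d E x)
     \<and> (\<forall>i\<le>d. \<forall>j\<le>d. j \<in> gal_orbit d R E i \<longrightarrow>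
          ((\<Sum>k\<le>d. inner_dist R x k * Q k i) = 0 \<longrightarrow> (\<Sum>k\<le>d. inner_dist R x k * Q k j) = 0)
        \<and> (E i *v x = 0 \<longrightarrow> E j *v x = 0))
     \<and> (\<forall>i\<le>d. ((\<Sum>k\<le>d. inner_dist R x k * Q k i) = 0 \<longleftrightarrow> E i *v x = 0))
     \<and> (\<forall>i\<le>d.
          ((\<Sum>k\<le>d. inner_dist R x k * Q k i) = 0 \<longrightarrow>
             (\<Sum>k\<le>d. inner_dist R x k * (\<Sum>j\<in>gal_orbit d R E i. Q k j)) = 0)
        \<and> (E i *v x = 0 \<longrightarrow> (\<Sum>j\<in>gal_orbit d R E i. E j) *v x = 0))"
proof -
  define n where "n = (of_nat CARD('x) :: complex)"
  have n0: "n \<noteq> 0" unfolding n_def by simp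
  have orth: "\<forall>i\<le>d. \<forall>j\<le>d. E i ** E j = (if i = j then E i else 0)"
    and Enz: "\<forall>j\<le>d. E j \<noteq> 0" and sumI: "(\<Sum>j\<le>d. E j) = mat 1"
    and Edef: "\<forall>j\<le>d. \<forall>a b. E j $ a $ b = (1 / n) * (\<Sum>i\<le>d. Q i j * adj R i $ a $ b)"
    using idem unfolding prim_idempotents_def n_def by blast+
  have EA: "\<forall>j\<le>d. \<forall>a b. E j $ a $ b = (\<Sum>i\<le>d. (Q i j / n) * adj R i $ a $ b)"
    using Edef by (simp add: sum_distrib_left)
  have R0: "\<forall>a b. R a b = 0 \<longleftrightarrow> a = b" using scheme unfolding comm_assoc_scheme_def by (elim conjE) assumption
  have Rtr: "\<forall>i\<le>d. \<exists>i'\<le>d. \<forall>a b. R a b = i \<longleftrightarrow> R b a = i'"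
    using scheme unfolding comm_assoc_scheme_def by (elim conjE) assumption
  have A0: "adj R 0 = mat 1" using R0 by (simp add: adj_def mat_def vec_eq_iff)
  have Atr: "\<forall>i\<le>d. \<exists>i'\<le>d. \<forall>a b. adj R i $ b $ a = adj R i' $ a $ b"
  proof (intro allI impI)
    fix i assume "i \<le> d"
    then obtain i' where i': "i' \<le> d" "\<forall>a b. R a b = i \<longleftrightarrow> R b a = i'" using Rtr by blast
    have "adj R i $ b $ a = adj R i' $ a $ b" for a b
      using i'(2)[rule_format, of b a] by (simp add: adj_def)
    then show "\<exists>i'\<le>d. \<forall>a b. adj R i $ b $ a = adj R i' $ a $ b" using i'(1) by blast
  qed
  have Areal: "\<forall>i a b. cnj (adj R i $ a $ b) = adj R i $ a $ b" by (simp add: adj_def)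
  interpret AS d E "adj R" "\<lambda>i j. Q i j / n"
    by (unfold_locales) (rule orth, rule Enz, rule sumI, rule EA, rule A0, rule Atr, rule Areal)
  define K where "K = splitting_field d R"
  have K: "is_subfield K" unfolding K_def by (rule splitting_subfield)
  have eigK: "\<forall>i\<in>{1..d}. \<forall>\<mu> v. v \<noteq> 0 \<and> adj R i *v v = \<mu> *s v \<longrightarrow> \<mu> \<in> K"
    unfolding K_def using splitting_eig[of d R] unfolding eigenvalues_nontriv_def by blast
  have AK: "\<forall>i a b. adj R i $ a $ b \<in> K" using sf_basic(1,2)[OF K] by (simp add: adj_def)
  have EK: "j \<le> d \<Longrightarrow> E j $ a $ b \<in> K" for j a b using E_in_K[OF K eigK AK] by blast
  have xR: "x $ a \<in> \<real>" for a
  proof -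
    obtain p q where "x $ a = of_int p / of_int q" using Rats_cases'[OF rat[rule_format, of a]] by blast
    then show ?thesis by simp
  qed
  have xr: "\<forall>a. cnj (x $ a) = x $ a" using xR Reals_cnj_iff by blast
  have xK: "x $ a \<in> K" for a using sf_rat[OF K rat[rule_format, of a]] .
  have P1: "E k *v x = 0" if j: "j \<le> d" "E j *v x = 0" and g: "gal_aut K \<sigma>" and k: "k \<le> d"
    and m: "mat_map \<sigma> (E j) = E k" for j k \<sigma>
  proof -
    have mul: "\<And>u v. u \<in> K \<Longrightarrow> v \<in> K \<Longrightarrow> \<sigma> (u * v) = \<sigma> u * \<sigma> v"
      using g unfolding gal_aut_def by auto
    have "(E k *v x) $ a = 0" for a
    proof -
      have "(E k *v x) $ a = (\<Sum>b\<in>UNIV. \<sigma> (E j $ a $ b) * x $ b)"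
        unfolding m[symmetric] by (simp add: matrix_vector_mult_def mat_map_def)
      also have "\<dots> = (\<Sum>b\<in>UNIV. \<sigma> (E j $ a $ b * x $ b))"
        by (rule sum.cong) (simp_all add: mul[OF EK[OF j(1)] xK] gal_rat[OF g K rat[rule_format]])
      also have "\<dots> = \<sigma> (\<Sum>b\<in>UNIV. E j $ a $ b * x $ b)"
        by (rule gal_sum[OF g K, symmetric]) (simp_all add: sf_basic(4)[OF K EK[OF j(1)] xK])
      also have "\<dots> = \<sigma> ((E j *v x) $ a)" by (simp add: matrix_vector_mult_def)
      also have "\<dots> = 0" using j(2) gal_facts(1)[OF g K] by simp
      finally show ?thesis .
    qed
    then show ?thesis by (simp add: vec_eq_iff)
  qed
  have part1: "\<forall>j\<in>design_set d E x. \<forall>\<sigma> k. gal_aut (splitting_field d R) \<sigma> \<and> k \<le> d \<and>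
          mat_map \<sigma> (E j) = E k \<longrightarrow> k \<in> design_set d E x"
  proof (intro ballI allI impI)
    fix j \<sigma> k assume j: "j \<in> design_set d E x"
      and h: "gal_aut (splitting_field d R) \<sigma> \<and> k \<le> d \<and> mat_map \<sigma> (E j) = E k"
    have j': "j \<le> d" "E j *v x = 0" using j unfolding design_set_def by auto
    have "gal_aut K \<sigma>" using h unfolding K_def by simp
    then have "E k *v x = 0" using P1[OF j' _ _] h by blast
    then show "k \<in> design_set d E x" using h unfolding design_set_def by simp
  qed
  have part2: "\<forall>j\<in>design_set d E x. gal_orbit d R E j \<subseteq> design_set d E x"
  proof (intro ballI subsetI)
    fix j k assume j: "j \<in> design_set d E x" and k: "k \<in> gal_orbit d R E j"
    then obtain \<sigma> where "k \<le> d" "gal_aut (splitting_field d R) \<sigma>" "mat_map \<sigma> (E j) = E k"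
      unfolding gal_orbit_def by blast
    then show "k \<in> design_set d E x" using part1 j by blast
  qed
  define S where "S = (\<Sum>a\<in>UNIV. x $ a * x $ a)"
  have Ssum: "S = (\<Sum>a\<in>UNIV. cnj (x $ a) * x $ a)"
    unfolding S_def by (rule sum.cong) (simp_all add: xr)
  obtain a0 where a0: "x $ a0 \<noteq> 0" using assms(4) by (metis vec_eq_iff zero_index)
  have S0: "S \<noteq> 0"
  proof
    assume "S = 0"
    then have "(\<Sum>a\<in>UNIV. cnj (x $ a) * x $ a) = 0" using Ssum by simp
    then have "x $ a0 = 0" by (rule sum_cnj_zero_UNIV[where f="\<lambda>a. x $ a"])
    then show False using a0 by simp
  qed
  have aQ: "(\<Sum>k\<le>d. inner_dist R x k * Q k i)
      = n * (\<Sum>a\<in>UNIV. \<Sum>b\<in>UNIV. x $ a * E i $ a $ b * x $ b) / S" if i: "i \<le> d" for i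
  proof -
    have "(\<Sum>k\<le>d. inner_dist R x k * Q k i)
        = (\<Sum>k\<le>d. Q k i * (\<Sum>a\<in>UNIV. \<Sum>b\<in>UNIV. x $ a * adj R k $ a $ b * x $ b)) / S"
    proof -
      have "inner_dist R x k * Q k i = Q k i * (\<Sum>a\<in>UNIV. \<Sum>b\<in>UNIV. x $ a * adj R k $ a $ b * x $ b) / S" for k
        unfolding inner_dist_def S_def by simp
      then have "(\<Sum>k\<le>d. inner_dist R x k * Q k i)
          = (\<Sum>k\<le>d. Q k i * (\<Sum>a\<in>UNIV. \<Sum>b\<in>UNIV. x $ a * adj R k $ a $ b * x $ b) / S)" by simp
      also have "\<dots> = (\<Sum>k\<le>d. Q k i * (\<Sum>a\<in>UNIV. \<Sum>b\<in>UNIV. x $ a * adj R k $ a $ b * x $ b)) / S"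
        by (rule sum_divide_distrib[symmetric])
      finally show ?thesis .
    qed
    also have "(\<Sum>k\<le>d. Q k i * (\<Sum>a\<in>UNIV. \<Sum>b\<in>UNIV. x $ a * adj R k $ a $ b * x $ b))
        = (\<Sum>a\<in>UNIV. \<Sum>b\<in>UNIV. \<Sum>k\<le>d. x $ a * (Q k i * adj R k $ a $ b) * x $ b)"
    proof -
      have "(\<Sum>k\<le>d. Q k i * (\<Sum>a\<in>UNIV. \<Sum>b\<in>UNIV. x $ a * adj R k $ a $ b * x $ b))
          = (\<Sum>k\<le>d. \<Sum>a\<in>UNIV. \<Sum>b\<in>UNIV. x $ a * (Q k i * adj R k $ a $ b) * x $ b)"
        by (simp add: sum_distrib_left mult_ac)
      also have "\<dots> = (\<Sum>a\<in>UNIV. \<Sum>b\<in>UNIV. \<Sum>k\<le>d. x $ a * (Q k i * adj R k $ a $ b) * x $ b)"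
        by (rule sum3_swap[symmetric])
      finally show ?thesis .
    qed
    also have "\<dots> = (\<Sum>a\<in>UNIV. \<Sum>b\<in>UNIV. x $ a * (n * E i $ a $ b) * x $ b)"
    proof (intro sum.cong refl)
      fix a b
      have "n * E i $ a $ b = (\<Sum>k\<le>d. Q k i * adj R k $ a $ b)"
        using Edef i n0 by simp
      then show "(\<Sum>k\<le>d. x $ a * (Q k i * adj R k $ a $ b) * x $ b) = x $ a * (n * E i $ a $ b) * x $ b"
        by (simp add: sum_distrib_left sum_distrib_right)
    qed
    also have "\<dots> = n * (\<Sum>a\<in>UNIV. \<Sum>b\<in>UNIV. x $ a * E i $ a $ b * x $ b)"
      by (simp add: sum_distrib_left mult_ac)
    finally show ?thesis .
  qed
  have part4: "\<forall>i\<le>d. ((\<Sum>k\<le>d. inner_dist R x k * Q k i) = 0 \<longleftrightarrow> E i *v x = 0)"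
  proof (intro allI impI)
    fix i assume i: "i \<le> d"
    have "(\<Sum>k\<le>d. inner_dist R x k * Q k i) = 0 \<longleftrightarrow> (\<Sum>a\<in>UNIV. \<Sum>b\<in>UNIV. x $ a * E i $ a $ b * x $ b) = 0"
      using aQ[OF i] n0 S0 by simp
    also have "\<dots> \<longleftrightarrow> (\<Sum>m\<in>UNIV. cnj ((E i *v x) $ m) * (E i *v x) $ m) = 0"
      using quad[OF i xr] by simp
    also have "\<dots> \<longleftrightarrow> E i *v x = 0"
    proof
      assume "(\<Sum>m\<in>UNIV. cnj ((E i *v x) $ m) * (E i *v x) $ m) = 0"
      then have "(E i *v x) $ m = 0" for m by (rule sum_cnj_zero_UNIV[where f="\<lambda>m. (E i *v x) $ m"])
      then show "E i *v x = 0" by (simp add: vec_eq_iff)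
    next
      assume "E i *v x = 0"
      then show "(\<Sum>m\<in>UNIV. cnj ((E i *v x) $ m) * (E i *v x) $ m) = 0" by simp
    qed
    finally show "(\<Sum>k\<le>d. inner_dist R x k * Q k i) = 0 \<longleftrightarrow> E i *v x = 0" .
  qed
  have orbE: "E j *v x = 0" if "i \<le> d" "j \<in> gal_orbit d R E i" "E i *v x = 0" for i j
  proof -
    have "i \<in> design_set d E x" using that unfolding design_set_def by simp
    then have "j \<in> design_set d E x" using part2 that(2) by blast
    then show ?thesis unfolding design_set_def by simp
  qed
  have orb_sub: "gal_orbit d R E i \<subseteq> {..d}" for i unfolding gal_orbit_def by auto
  have part3: "\<forall>i\<le>d. \<forall>j\<le>d. j \<in> gal_orbit d R E i \<longrightarrow>
          ((\<Sum>k\<le>d. inner_dist R x k * Q k i) = 0 \<longrightarrow> (\<Sum>k\<le>d. inner_dist R x k * Q k j) = 0)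
        \<and> (E i *v x = 0 \<longrightarrow> E j *v x = 0)"
  proof (intro allI impI conjI)
    fix i j assume i: "i \<le> d" and j: "j \<le> d" and o: "j \<in> gal_orbit d R E i"
    show "E j *v x = 0" if "E i *v x = 0" using orbE[OF i o that] .
    assume "(\<Sum>k\<le>d. inner_dist R x k * Q k i) = 0"
    then have "E i *v x = 0" using part4 i by blast
    then have "E j *v x = 0" using orbE[OF i o] by blast
    then show "(\<Sum>k\<le>d. inner_dist R x k * Q k j) = 0" using part4 j by blast
  qed
  have part5: "\<forall>i\<le>d.
          ((\<Sum>k\<le>d. inner_dist R x k * Q k i) = 0 \<longrightarrow>
             (\<Sum>k\<le>d. inner_dist R x k * (\<Sum>j\<in>gal_orbit d R E i. Q k j)) = 0)
        \<and> (E i *v x = 0 \<longrightarrow> (\<Sum>j\<in>gal_orbit d R E i. E j) *v x = 0)"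
  proof (intro allI impI conjI)
    fix i assume i: "i \<le> d"
    have fin: "finite (gal_orbit d R E i)" using orb_sub finite_subset by blast
    {
      assume "(\<Sum>k\<le>d. inner_dist R x k * Q k i) = 0"
      then have "E i *v x = 0" using part4 i by blast
      then have z: "(\<Sum>k\<le>d. inner_dist R x k * Q k j) = 0" if "j \<in> gal_orbit d R E i" for j
      proof -
        have "j \<le> d" using orb_sub[of i] that by blast
        moreover have "E j *v x = 0" using orbE[OF i that] \<open>E i *v x = 0\<close> .
        ultimately show ?thesis using part4 by blast
      qed
      have "(\<Sum>k\<le>d. inner_dist R x k * (\<Sum>j\<in>gal_orbit d R E i. Q k j))
          = (\<Sum>j\<in>gal_orbit d R E i. \<Sum>k\<le>d. inner_dist R x k * Q k j)"
        by (simp add: sum_distrib_left) (rule sum.swap)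
      also have "\<dots> = 0" using z by simp
      finally show "(\<Sum>k\<le>d. inner_dist R x k * (\<Sum>j\<in>gal_orbit d R E i. Q k j)) = 0" .
    }
    {
      assume E0: "E i *v x = 0"
      have "(\<Sum>j\<in>gal_orbit d R E i. E j) *v x = (\<Sum>j\<in>gal_orbit d R E i. E j *v x)"
        using fin by (induct rule: finite_induct) (simp_all add: matrix_vector_mult_add_rdistrib)
      also have "\<dots> = 0" using orbE[OF i _ E0] by simp
      finally show "(\<Sum>j\<in>gal_orbit d R E i. E j) *v x = 0" .
    }
  qed
  show ?thesis by (intro conjI, fact part1, fact part2, fact part3, fact part4, fact part5)
qed

end
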